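(* Let $q$ be a prime power, let $b,n,m',s\in\mathbb{N}$ with $b<n$, and set $m=m's$. Let $\mathcal S_q=\{\mathbf x\in\mathbb F_q^n:\mathrm{wt}(\mathbf x)\le b\}$. Fix a primitive polynomial $p(x)$ of degree $s$ over $\mathbb F_q$ and a root $\alpha\in\mathbb F_{q^s}$ of it, and let $\phi_s$ be the associated map $\mathbb F_q^{m\times n}\to\mathbb F_{q^s}^{m'\times n}$ described in the context. Let $\mathbf A\in\mathbb F_q^{m\times n}$ be such that $\phi_s(\mathbf A)$ is a parity check matrix of an $[n,n-m',d]_{q^s}$ linear code with $d>2b$. Then every $\mathbf x\in\mathcal S_q$ can be exactly recovered from the noiseless measurement $\mathbf y=\mathbf A\mathbf x$; that is, there exists a map $D:\mathbb F_q^m\to\mathbb F_q^n$ with $D(\mathbf A\mathbf x)=\mathbf x$ for all $\mathbf x\in\mathcal S_q$.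
   Context: $\mathbb F_q$ denotes the finite field with $q$ elements and $\mathrm{wt}(\mathbf x)$ the number of nonzero entries of a vector $\mathbf x$. A primitive polynomial of degree $s$ over $\mathbb F_q$ is a monic irreducible polynomial of degree $s$ having a primitive element $\alpha$ of $\mathbb F_{q^s}$ (a generator of its multiplicative group) as a root; then $\{1,\alpha,\dots,\alpha^{s-1}\}$ is a basis of $\mathbb F_{q^s}$ over $\mathbb F_q$, and $\mathbb F_q\subseteq\mathbb F_{q^s}$. For $m=m's$ and $\mathbf C=[c_{ij}]\in\mathbb F_q^{m\times n}$, $\phi_s(\mathbf C)=[c'_{kl}]\in\mathbb F_{q^s}^{m'\times n}$ is defined by $c'_{kl}=\sum_{t=0}^{s-1}c_{(k-1)s+t+1,\,l}\,\alpha^t$ ($1\le k\le m'$, $1\le l\le n$). An $[N,K,D]_Q$ linear code is a $K$-dimensional subspace of $\mathbb F_Q^N$ whose minimum Hamming distance between distinct codewords is $D$. A parity check matrix of such a code is an $(N-K)\times N$ matrix over $\mathbb F_Q$ of rank $N-K$ whose null space is the code. *)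

theory Defs
  imports "Jordan_Normal_Form.DL_Rank" "Jordan_Normal_Form.Matrix_Kernel"
    "HOL-Computational_Algebra.Polynomial_Factorial"
begin

definition hamming_wt :: "'a::zero vec \<Rightarrow> nat" where
  "hamming_wt x = card {i. i < dim_vec x \<and> x $ i \<noteq> 0}"

definition hamming_dist :: "'a vec \<Rightarrow> 'a vec \<Rightarrow> nat" where
  "hamming_dist x y = card {i. i < dim_vec x \<and> x $ i \<noteq> y $ i}"

definition is_linear_code :: "nat \<Rightarrow> nat \<Rightarrow> nat \<Rightarrow> 'a::field vec set \<Rightarrow> bool" where
  "is_linear_code N K D C \<longleftrightarrow>
     subspace class_ring C (module_vec TYPE('a) N) \<and>
     vectorspace.dim class_ring ((module_vec TYPE('a) N)\<lparr>carrier := C\<rparr>) = K \<and>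
     (\<exists>x\<in>C. \<exists>y\<in>C. x \<noteq> y \<and> hamming_dist x y = D) \<and>
     (\<forall>x\<in>C. \<forall>y\<in>C. x \<noteq> y \<longrightarrow> D \<le> hamming_dist x y)"

definition is_parity_check_matrix :: "'a::field mat \<Rightarrow> nat \<Rightarrow> nat \<Rightarrow> 'a vec set \<Rightarrow> bool" where
  "is_parity_check_matrix H N K C \<longleftrightarrow>
     H \<in> carrier_mat (N - K) N \<and>
     vec_space.rank (N - K) H = N - K \<and>
     C = mat_kernel H"

definition primitive_element :: "'b::field \<Rightarrow> bool" where
  "primitive_element \<alpha> \<longleftrightarrow> \<alpha> \<noteq> 0 \<and> (\<forall>y. y \<noteq> 0 \<longrightarrow> (\<exists>k::nat. y = \<alpha> ^ k))"

text \<open>The field 'b is an extension of 'a via the (injective) field embedding emb.\<close>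
definition field_embedding :: "('a::field \<Rightarrow> 'b::field) \<Rightarrow> bool" where
  "field_embedding emb \<longleftrightarrow> inj emb \<and> emb 0 = 0 \<and> emb 1 = 1 \<and>
     (\<forall>x y. emb (x + y) = emb x + emb y) \<and> (\<forall>x y. emb (x * y) = emb x * emb y)"

definition primitive_poly_with_root ::
    "('a::field \<Rightarrow> 'b::field) \<Rightarrow> 'a poly \<Rightarrow> nat \<Rightarrow> 'b \<Rightarrow> bool" where
  "primitive_poly_with_root emb p s \<alpha> \<longleftrightarrow>
     lead_coeff p = 1 \<and> irreducible p \<and> degree p = s \<and>
     primitive_element \<alpha> \<and> poly (map_poly emb p) \<alpha> = 0"

text \<open>The map phi_s (0-based indices): c'_{k,l} = sum_{t<s} c_{k s + t, l} alpha^t.\<close>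
definition phi_s :: "('a \<Rightarrow> 'b::comm_ring_1) \<Rightarrow> 'b \<Rightarrow> nat \<Rightarrow> 'a mat \<Rightarrow> 'b mat" where
  "phi_s emb \<alpha> s C = mat (dim_row C div s) (dim_col C)
     (\<lambda>(k, l). \<Sum>t<s. emb (C $$ (k * s + t, l)) * \<alpha> ^ t)"

end

theory Submission
  imports Defs
begin

lemma emb_sum:
  assumes "field_embedding emb"
  shows "emb (sum f S) = (\<Sum>i\<in>S. emb (f i))"
proof (cases "finite S")
  case True then show ?thesis
    by (induction S rule: finite_induct) (use assms in \<open>auto simp: field_embedding_def\<close>)
next
  case False then show ?thesis using assms by (simp add: field_embedding_def)
qed

lemma wt_diff:
  fixes x y :: "'a::ab_group_add vec"
  assumes "x \<in> carrier_vec n" "y \<in> carrier_vec n"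
  shows "hamming_wt (x - y) \<le> hamming_wt x + hamming_wt y"
proof -
  have "{i. i < dim_vec (x - y) \<and> (x - y) $ i \<noteq> 0} \<subseteq>
        {i. i < dim_vec x \<and> x $ i \<noteq> 0} \<union> {i. i < dim_vec y \<and> y $ i \<noteq> 0}"
    using assms by auto
  hence "card {i. i < dim_vec (x - y) \<and> (x - y) $ i \<noteq> 0} \<le>
        card ({i. i < dim_vec x \<and> x $ i \<noteq> 0} \<union> {i. i < dim_vec y \<and> y $ i \<noteq> 0})"
    by (intro card_mono) auto
  also have "\<dots> \<le> hamming_wt x + hamming_wt y"
    unfolding hamming_wt_def by (rule card_Un_le)
  finally show ?thesis unfolding hamming_wt_def .
qed

theorem theorem1:
  fixes emb :: "'a::{field,finite} \<Rightarrow> 'b::{field,finite}"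
    and p :: "'a poly" and \<alpha> :: "'b"
    and b n m' s m d :: nat
    and A :: "'a mat"
  assumes "b < n"
    and "m = m' * s"
    and "field_embedding emb"
    and "card (UNIV :: 'b set) = card (UNIV :: 'a set) ^ s"
    and "primitive_poly_with_root emb p s \<alpha>"
    and "A \<in> carrier_mat m n"
    and "\<exists>C. is_linear_code n (n - m') d C \<and>
              is_parity_check_matrix (phi_s emb \<alpha> s A) n (n - m') C"
    and "d > 2 * b"
  shows "\<exists>D :: 'a vec \<Rightarrow> 'a vec. \<forall>x \<in> carrier_vec n. hamming_wt x \<le> b \<longrightarrow> D (A *\<^sub>v x) = x"
proof -
  obtain C where lc: "is_linear_code n (n - m') d C"
    and pc: "is_parity_check_matrix (phi_s emb \<alpha> s A) n (n - m') C" using assms(7) by blast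
  define H where "H = phi_s emb \<alpha> s A"
  have CH: "C = mat_kernel H" and Hc: "H \<in> carrier_mat (n - (n - m')) n"
    using pc unfolding is_parity_check_matrix_def H_def by auto
  have E: "inj emb" "emb 0 = 0" "\<And>x y. emb (x * y) = emb x * emb y"
    "\<And>x y. emb (x - y) = emb x - emb y"
  proof -
    show "inj emb" "emb 0 = 0" "\<And>x y. emb (x * y) = emb x * emb y"
      using assms(3) by (auto simp: field_embedding_def)
    fix x y :: 'a
    have "emb (x - y) + emb y = emb x" using assms(3)
      by (metis diff_add_cancel field_embedding_def)
    thus "emb (x - y) = emb x - emb y" by (simp add: eq_diff_eq)
  qed
  have E0: "emb x = 0 \<longleftrightarrow> x = 0" for x
    using E(1,2) by (metis injD)
  have key: "z = 0\<^sub>v n" if z: "z \<in> carrier_vec n" "A *\<^sub>v z = 0\<^sub>v m" "hamming_wt z < d" for z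
  proof (rule ccontr)
    assume nz: "z \<noteq> 0\<^sub>v n"
    define w where "w = map_vec emb z"
    have wc: "w \<in> carrier_vec n" using z unfolding w_def by simp
    have Hw: "H *\<^sub>v w = 0\<^sub>v (dim_row H)"
    proof (rule eq_vecI)
      fix k assume k: "k < dim_vec (0\<^sub>v (dim_row H) :: 'b vec)"
      hence kr: "k < m div s" unfolding H_def phi_s_def using assms(6) by simp
      hence spos: "s > 0" by (cases "s = 0") auto
      have rows: "k * s + t < m" if "t < s" for t
      proof -
        have "(k + 1) * s \<le> m div s * s" using kr by (intro mult_le_mono1) simp
        also have "\<dots> \<le> m" by (rule div_times_less_eq_dividend)
        finally have "(k + 1) * s \<le> m" .
        thus ?thesis using that by (simp add: add_mult_distrib)
      qed
      have "(H *\<^sub>v w) $ k = (\<Sum>l<n. H $$ (k, l) * w $ l)"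
        using k Hc wc by (simp add: mult_mat_vec_def scalar_prod_def lessThan_atLeast0)
      also have "\<dots> = (\<Sum>l<n. \<Sum>t<s. emb (A $$ (k * s + t, l)) * \<alpha> ^ t * emb (z $ l))"
        unfolding H_def phi_s_def w_def using kr assms(6) z(1)
        by (intro sum.cong refl) (auto simp: sum_distrib_right)
      also have "\<dots> = (\<Sum>t<s. \<alpha> ^ t * emb (\<Sum>l<n. A $$ (k * s + t, l) * z $ l))"
        by (subst sum.swap) (auto simp: emb_sum[OF assms(3)] E(3) sum_distrib_left mult_ac intro!: sum.cong)
      also have "\<dots> = (\<Sum>t<s. \<alpha> ^ t * emb ((A *\<^sub>v z) $ (k * s + t)))"
        using rows assms(6) z(1)
        by (intro sum.cong refl) (simp add: mult_mat_vec_def scalar_prod_def lessThan_atLeast0)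
      also have "\<dots> = 0" using rows z(2) E(2) by simp
      finally show "(H *\<^sub>v w) $ k = 0\<^sub>v (dim_row H) $ k" using k by simp
    qed (simp)
    have wC: "w \<in> C" using CH wc Hw Hc by (simp add: mat_kernel_def)
    have "H *\<^sub>v 0\<^sub>v n = 0\<^sub>v (dim_row H)"
      using Hc by (intro eq_vecI) (auto simp: mult_mat_vec_def scalar_prod_def)
    hence zC: "0\<^sub>v n \<in> C" using CH Hc by (simp add: mat_kernel_def)
    have wnz: "w \<noteq> 0\<^sub>v n"
    proof
      assume "w = 0\<^sub>v n"
      hence wz: "map_vec emb z = 0\<^sub>v n" unfolding w_def .
      have "z = 0\<^sub>v n"
      proof (rule eq_vecI)
        fix i assume "i < dim_vec (0\<^sub>v n :: 'a vec)"
        hence i: "i < n" by simp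
        have "map_vec emb z $ i = 0\<^sub>v n $ i" using wz by simp
        hence "emb (z $ i) = 0" using i z(1) by simp
        thus "z $ i = 0\<^sub>v n $ i" using i E0 by simp
      qed (use z(1) in simp)
      with nz show False by simp
    qed
    have "d \<le> hamming_dist w (0\<^sub>v n)" using lc wC zC wnz unfolding is_linear_code_def by blast
    also have "hamming_dist w (0\<^sub>v n) = hamming_wt z"
      unfolding hamming_dist_def hamming_wt_def w_def using z(1) E(1,2)
      by (intro arg_cong[where f=card]) (auto, metis injD)
    finally show False using z(3) by simp
  qed
  define D where "D y = (SOME x. x \<in> carrier_vec n \<and> hamming_wt x \<le> b \<and> A *\<^sub>v x = y)" for y
  show ?thesis
  proof (intro exI ballI impI)
    fix x :: "'a vec" assume x: "x \<in> carrier_vec n" "hamming_wt x \<le> b"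
    let ?P = "\<lambda>x'. x' \<in> carrier_vec n \<and> hamming_wt x' \<le> b \<and> A *\<^sub>v x' = A *\<^sub>v x"
    have "?P (D (A *\<^sub>v x))" unfolding D_def by (rule someI[of ?P x]) (use x in auto)
    then obtain y where y: "y = D (A *\<^sub>v x)" "y \<in> carrier_vec n" "hamming_wt y \<le> b"
      "A *\<^sub>v y = A *\<^sub>v x" by blast
    have "A *\<^sub>v (y - x) = A *\<^sub>v y - A *\<^sub>v x"
      using assms(6) x(1) y(2) by (simp add: mult_minus_distrib_mat_vec)
    also have "\<dots> = A *\<^sub>v x - A *\<^sub>v x" using y(4) by simp
    also have "\<dots> = 0\<^sub>v m"
    proof (rule minus_cancel_vec)
      show "A *\<^sub>v x \<in> carrier_vec m" using assms(6) by (rule mult_mat_vec_carrier) (rule x(1))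
    qed
    finally have "A *\<^sub>v (y - x) = 0\<^sub>v m" .
    moreover have "hamming_wt (y - x) < d"
      using wt_diff[OF y(2) x(1)] x(2) y(3) assms(8) by linarith
    ultimately have yx: "y - x = 0\<^sub>v n" using key x(1) y(2) by simp
    have "y = x"
    proof (intro eq_vecI)
      fix i assume "i < dim_vec x"
      hence "i < n" using x(1) by simp
      hence "(y - x) $ i = 0" using yx by simp
      moreover have "(y - x) $ i = y $ i - x $ i" using \<open>i < n\<close> x(1) by simp
      ultimately show "y $ i = x $ i" by simp
    qed (use x(1) y(2) in simp)
    thus "D (A *\<^sub>v x) = x" using y(1) by simp
  qed
qed

end
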